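(* Let $f:\mathbb{R}\to(0,\infty)$ be $C^4$, unimodal with maximum at $0$, of the form $f=e^{-H}$ with $H$ regularly varying (there is $\alpha>0$ with $H(tx)/H(t)\to x^\alpha$ as $|t|\to\infty$ for all $x>0$), and with $|(\log f)''''|<M$ for some $M>0$. Suppose there exists $\gamma>0$ such that $|\mathrm{Var}_{g_\beta}(Y^2)-2|=\mathcal{O}(\beta^{-\gamma})$ as $\beta\to\infty$, where $g_\beta(y)\propto f^\beta\big(y/\sqrt{-\beta h''(0)}\big)$ is a probability density. Then, as $\beta\to\infty$, $$\frac{1}{4\beta}R(\beta)=\mathcal{O}(\beta^{-k}),$$ where in general $k=5/2$, but if $h'''(0)=0$ then $k=3$.
   Context: $h=\log f$, $k(x)=xh'(x)$, $r(x)=x^2h''(x)$; $\mathbb{E}_\beta$ denotes expectation under $f^\beta/\int f^\beta$; $R(\beta)=\mathbb{E}_\beta[r(X)-k(X)]$. *)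

theory Defs
  imports "HOL-Analysis.Analysis" "HOL-Library.Landau_Symbols"
begin

definition C4 :: "(real \<Rightarrow> real) \<Rightarrow> bool" where
  "C4 f \<longleftrightarrow> (\<forall>n<4. \<forall>x. (deriv ^^ n) f differentiable (at x))
              \<and> continuous_on UNIV ((deriv ^^ 4) f)"

definition unimodal_at0 :: "(real \<Rightarrow> real) \<Rightarrow> bool" where
  "unimodal_at0 f \<longleftrightarrow> mono_on {..0} f \<and> antimono_on {0..} f"

definition regularly_varying :: "(real \<Rightarrow> real) \<Rightarrow> bool" where
  "regularly_varying H \<longleftrightarrow>
     (\<exists>\<alpha>>0. \<forall>x>0. ((\<lambda>t. H (t * x) / H t) \<longlongrightarrow> x powr \<alpha>) at_infinity)"

definition Ebeta :: "(real \<Rightarrow> real) \<Rightarrow> real \<Rightarrow> (real \<Rightarrow> real) \<Rightarrow> real" where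
  "Ebeta f \<beta> \<phi> = (\<integral>x. \<phi> x * f x powr \<beta> \<partial>lborel) / (\<integral>x. f x powr \<beta> \<partial>lborel)"

text \<open>h = log f, k(x) = x h'(x), r(x) = x^2 h''(x), R(beta) = E_beta[r(X) - k(X)].\<close>
definition logf :: "(real \<Rightarrow> real) \<Rightarrow> real \<Rightarrow> real" where
  "logf f = (\<lambda>x. ln (f x))"

definition Rfun :: "(real \<Rightarrow> real) \<Rightarrow> real \<Rightarrow> real" where
  "Rfun f \<beta> = Ebeta f \<beta>
     (\<lambda>x. x\<^sup>2 * (deriv ^^ 2) (logf f) x - x * deriv (logf f) x)"

definition gbeta :: "(real \<Rightarrow> real) \<Rightarrow> real \<Rightarrow> real \<Rightarrow> real" where
  "gbeta f \<beta> = (let s = sqrt (- \<beta> * (deriv ^^ 2) (logf f) 0) in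
     (\<lambda>y. f (y / s) powr \<beta> / (\<integral>z. f (z / s) powr \<beta> \<partial>lborel)))"

definition dvar :: "(real \<Rightarrow> real) \<Rightarrow> (real \<Rightarrow> real) \<Rightarrow> real" where
  "dvar g \<phi> = (\<integral>y. (\<phi> y)\<^sup>2 * g y \<partial>lborel) - (\<integral>y. \<phi> y * g y \<partial>lborel)\<^sup>2"

end

theory Submission
  imports Defs "HOL-Probability.Distributions"
begin

lemma derivs_logf:
  fixes f :: "real \<Rightarrow> real"
  assumes pos: "\<And>x. f x > 0" and C4: "C4 f"
  shows "\<And>m x. m \<le> 3 \<Longrightarrow> ((deriv ^^ m) (logf f) has_real_derivative (deriv ^^ Suc m) (logf f) x) (at x)"
proof -
  define F where "F n = (deriv ^^ n) f" for n
  have dF: "(F n has_real_derivative F (Suc n) x) (at x)" if "n \<le> 3" for n x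
  proof -
    have "F n differentiable (at x)" using C4 that unfolding C4_def F_def by auto
    hence "(F n has_real_derivative deriv (F n) x) (at x)" using DERIV_deriv_iff_real_differentiable by blast
    moreover have "deriv (F n) = F (Suc n)" by (simp add: F_def)
    ultimately show ?thesis by simp
  qed
  define F1 where "F1 = F 1"
  define F2 where "F2 = F 2"
  define F3 where "F3 = F 3"
  define F4 where "F4 = F 4"
  have F0: "F 0 = f" by (simp add: F_def)
  have d0: "(f has_real_derivative F1 x) (at x)" for x using dF[of 0 x] F0 F1_def by simp
  have d1: "(F1 has_real_derivative F2 x) (at x)" for x using dF[of 1 x] F1_def F2_def by (simp add: numeral_2_eq_2)
  have d2: "(F2 has_real_derivative F3 x) (at x)" for x using dF[of 2 x] F3_def F2_def by (simp add: numeral_3_eq_3 numeral_2_eq_2)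
  have d3: "(F3 has_real_derivative F4 x) (at x)" for x using dF[of 3 x] F3_def F4_def by (simp add: numeral_3_eq_3 numeral_Bit0)
  define q1 where "q1 x = F1 x / f x" for x
  define q2 where "q2 x = F2 x / f x" for x
  define q3 where "q3 x = F3 x / f x" for x
  have fne: "f x \<noteq> 0" for x using pos[of x] by simp
  have e1: "((\<lambda>x. ln (f x)) has_real_derivative q1 x) (at x)" for x
    unfolding q1_def using pos[of x] by (auto intro!: derivative_eq_intros d0 simp: field_simps)
  have dq1: "(q1 has_real_derivative (q2 x - (q1 x)^2)) (at x)" for x
    unfolding q1_def q2_def using fne[of x] by (auto intro!: derivative_eq_intros d0 d1 simp: field_simps power2_eq_square)
  have dq2: "(q2 has_real_derivative (q3 x - q2 x * q1 x)) (at x)" for x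
    unfolding q1_def q2_def q3_def using fne[of x] by (auto intro!: derivative_eq_intros d0 d2 simp: field_simps power2_eq_square)
  have dq3: "(q3 has_real_derivative (F4 x / f x - q3 x * q1 x)) (at x)" for x
    unfolding q1_def q3_def using fne[of x] by (auto intro!: derivative_eq_intros d0 d3 simp: field_simps power2_eq_square)
  define D2 where "D2 x = q2 x - (q1 x)^2" for x
  define D3 where "D3 x = q3 x - 3 * q1 x * q2 x + 2 * (q1 x)^3" for x
  have dD2: "(D2 has_real_derivative D3 x) (at x)" for x
    unfolding D2_def D3_def by (auto intro!: derivative_eq_intros dq1 dq2 simp: field_simps power2_eq_square power3_eq_cube)
  have dD3: "D3 differentiable (at x)" for x
  proof -
    have "(D3 has_real_derivative (F4 x / f x - q3 x * q1 x - 3 * ((q2 x - (q1 x)^2) * q2 x + q1 x * (q3 x - q2 x * q1 x))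
       + 2 * (3 * (q1 x)^2 * (q2 x - (q1 x)^2)))) (at x)"
      unfolding D3_def by (auto intro!: derivative_eq_intros dq1 dq2 dq3 simp: field_simps power2_eq_square power3_eq_cube)
    then show ?thesis using real_differentiable_def by blast
  qed
  have h1': "deriv (logf f) = q1"
    using e1 by (auto simp: logf_def fun_eq_iff intro!: DERIV_imp_deriv)
  have h1: "(deriv ^^ 1) (logf f) = q1" using h1' by simp
  have "deriv q1 = D2" using dq1 by (auto simp: D2_def fun_eq_iff intro!: DERIV_imp_deriv)
  hence h2: "(deriv ^^ 2) (logf f) = D2"
    using h1' by (simp add: numeral_2_eq_2)
  have "deriv D2 = D3" using dD2 by (auto simp: fun_eq_iff intro!: DERIV_imp_deriv)
  hence h3: "(deriv ^^ 3) (logf f) = D3"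
    using h2 by (simp add: numeral_3_eq_3 numeral_2_eq_2)
  have h4: "(deriv ^^ 4) (logf f) = deriv D3"
    using h3 by (simp add: numeral_3_eq_3 numeral_Bit0 )
  fix m :: nat and x :: real assume "m \<le> 3"
  then consider "m = 0" | "m = 1" | "m = 2" | "m = 3" by linarith
  then show "((deriv ^^ m) (logf f) has_real_derivative (deriv ^^ Suc m) (logf f) x) (at x)"
  proof cases
    case 1 then show ?thesis using e1 h1 by (simp add: logf_def)
  next
    case 2 then show ?thesis using dq1 h1 h2 D2_def by (simp add: numeral_2_eq_2[symmetric])
  next
    case 3 then show ?thesis using dD2 h2 h3 by (simp add: numeral_3_eq_3[symmetric])
  next
    case 4 then show ?thesis using dD3 h3 h4 DERIV_deriv_iff_real_differentiable
      by (metis Suc_numeral semiring_norm(2) semiring_norm(8))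
  qed
qed

lemma taylor_pt:
  fixes D :: "nat \<Rightarrow> real \<Rightarrow> real"
  assumes dD: "\<And>m x. m \<le> 3 \<Longrightarrow> (D m has_real_derivative D (Suc m) x) (at x)"
    and M: "\<And>x. \<bar>D 4 x\<bar> \<le> M" and D10: "D 1 0 = 0"
  shows "\<bar>x\<^sup>2 * D 2 x - x * D 1 x - D 3 0 / 2 * x ^ 3\<bar> \<le> M * x ^ 4"
proof -
  have "\<exists>t. \<bar>t\<bar> \<le> \<bar>x\<bar> \<and> D 2 x = (\<Sum>m<2. D (m+2) 0 / (fact m) * x ^ m) + D (2+2) t / (fact 2) * x ^ 2"
    proof (rule Maclaurin_bi_le[where diff="\<lambda>m. D (m+2)"])
    show "\<forall>m t. m < 2 \<and> \<bar>t\<bar> \<le> \<bar>x\<bar> \<longrightarrow> (D (m + 2) has_real_derivative D (Suc m + 2) t) (at t)"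
    proof (intro allI impI)
      fix m :: nat and t :: real assume "m < 2 \<and> \<bar>t\<bar> \<le> \<bar>x\<bar>"
      then have "m + 2 \<le> 3" by simp
      from dD[OF this, of t] show "(D (m + 2) has_real_derivative D (Suc m + 2) t) (at t)" by simp
    qed
  qed (simp add: numeral_2_eq_2)
  moreover have "(\<Sum>m<2. D (m+2) 0 / (fact m) * x ^ m) = D 2 0 + D 3 0 * x"
    by (simp add: numeral_2_eq_2 numeral_3_eq_3)
  ultimately obtain t1 where t1: "D 2 x = D 2 0 + D 3 0 * x + D 4 t1 / 2 * x^2"
    by auto
  have "\<exists>t. \<bar>t\<bar> \<le> \<bar>x\<bar> \<and> D 1 x = (\<Sum>m<3. D (m+1) 0 / (fact m) * x ^ m) + D (3+1) t / (fact 3) * x ^ 3"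
    proof (rule Maclaurin_bi_le[where diff="\<lambda>m. D (m+1)"])
    show "\<forall>m t. m < 3 \<and> \<bar>t\<bar> \<le> \<bar>x\<bar> \<longrightarrow> (D (m + 1) has_real_derivative D (Suc m + 1) t) (at t)"
    proof (intro allI impI)
      fix m :: nat and t :: real assume "m < 3 \<and> \<bar>t\<bar> \<le> \<bar>x\<bar>"
      then have "m + 1 \<le> 3" by simp
      from dD[OF this, of t] show "(D (m + 1) has_real_derivative D (Suc m + 1) t) (at t)" by simp
    qed
  qed (simp add: numeral_2_eq_2)
  moreover have "(\<Sum>m<3. D (m+1) 0 / (fact m) * x ^ m) = D 1 0 + D 2 0 * x + D 3 0 / 2 * x^2"
    by (simp add: numeral_2_eq_2 numeral_3_eq_3)
  moreover have "(fact 3 :: real) = 6" by (simp add: fact_numeral)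
  ultimately obtain t2 where t2: "D 1 x = D 1 0 + D 2 0 * x + D 3 0 / 2 * x^2 + D 4 t2 / 6 * x^3"
    by auto
  have eq: "x\<^sup>2 * D 2 x - x * D 1 x - D 3 0 / 2 * x ^ 3 = x^4 * (D 4 t1 / 2 - D 4 t2 / 6)"
    using t1 t2 D10 by (simp add: algebra_simps power2_eq_square power3_eq_cube power4_eq_xxxx)
  have "\<bar>D 4 t1 / 2 - D 4 t2 / 6\<bar> \<le> M"
    using M[of t1] M[of t2] by linarith
  moreover have "x ^ 4 \<ge> 0" by simp
  ultimately have "x ^ 4 * \<bar>D 4 t1 / 2 - D 4 t2 / 6\<bar> \<le> x ^ 4 * M" by (rule mult_left_mono)
  then show ?thesis unfolding eq abs_mult by (simp add: mult.commute)
qed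

lemma taylor_h:
  fixes D :: "nat \<Rightarrow> real \<Rightarrow> real"
  assumes dD: "\<And>m x. m \<le> 3 \<Longrightarrow> (D m has_real_derivative D (Suc m) x) (at x)"
    and D10: "D 1 0 = 0"
  shows "\<exists>t. \<bar>t\<bar> \<le> \<bar>x\<bar> \<and> D 0 x = D 0 0 + D 2 t / 2 * x^2"
proof -
  have "\<exists>t. \<bar>t\<bar> \<le> \<bar>x\<bar> \<and> D 0 x = (\<Sum>m<2. D m 0 / (fact m) * x ^ m) + D 2 t / (fact 2) * x ^ 2"
    proof (rule Maclaurin_bi_le[where diff="D"])
    show "\<forall>m t. m < 2 \<and> \<bar>t\<bar> \<le> \<bar>x\<bar> \<longrightarrow> (D m has_real_derivative D (Suc m) t) (at t)"
      using dD by simp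
  qed (simp add: numeral_2_eq_2)
  then show ?thesis using D10 by (auto simp: numeral_2_eq_2)
qed

lemma integrable_g1: "integrable lborel (\<lambda>x::real. indicator {1..} x * x powr (-2))"
proof -
  have "(\<lambda>x::real. x powr (-2)) integrable_on {1..}"
    using has_integral_powr_to_inf[of "-2" 1] unfolding integrable_on_def by force
  hence "(\<lambda>x::real. x powr (-2)) integrable_on {1..}" by blast
  hence "(\<lambda>x::real. x powr (-2)) absolutely_integrable_on {1..}"
    by (rule nonnegative_absolutely_integrable_1) auto
  hence "integrable lebesgue (\<lambda>x::real. indicator {1..} x *\<^sub>R x powr (-2))"
    unfolding set_integrable_def by simp
  hence "integrable lborel (\<lambda>x::real. indicator {1..} x *\<^sub>R x powr (-2))"
    by (subst integrable_completion[symmetric]) auto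
  then show ?thesis by simp
qed

lemma integrable_G: "integrable lborel (\<lambda>x::real. indicator {1..} x * x powr (-2)
   + indicator {1..} (-x) * (-x) powr (-2) + indicator {-1..1} x)"
proof -
  have a: "integrable lborel (\<lambda>x::real. indicator {1..} (0 + (-1) * x) * (0 + (-1) * x) powr (-2))"
    by (rule lborel_integrable_real_affine[OF integrable_g1]) simp
  have b: "integrable lborel (\<lambda>x::real. indicator {-1..1} x :: real)"
    by (simp add: integrable_indicator_iff)
  show ?thesis using integrable_g1 a b by (intro Bochner_Integration.integrable_add) auto
qed

lemma regvar_integrable:
  fixes H :: "real \<Rightarrow> real"
  assumes regvar: "regularly_varying H"
    and monoR: "\<And>x y. 0 \<le> x \<Longrightarrow> x \<le> y \<Longrightarrow> H x \<le> H y"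
    and monoL: "\<And>x y. x \<le> y \<Longrightarrow> y \<le> 0 \<Longrightarrow> H y \<le> H x"
    and meas: "H \<in> borel_measurable borel"
  shows "\<exists>b>0. integrable lborel (\<lambda>x. (1 + x^4) * exp (- b * H x))"
proof -
  obtain \<alpha> where \<alpha>: "\<alpha> > 0" "\<And>x. x>0 \<Longrightarrow> ((\<lambda>t. H (t*x)/H t) \<longlongrightarrow> x powr \<alpha>) at_infinity"
    using regvar unfolding regularly_varying_def by blast
  define q where "q = (1 + 2 powr \<alpha>)/2"
  have p1: "2 powr \<alpha> > 1" using \<alpha> by simp
  have q1: "q > 1" "q < 2 powr \<alpha>" using p1 by (auto simp: q_def)
  have "eventually (\<lambda>t. H(t*2)/H t > q) at_infinity"
    using \<alpha>(2)[of 2] q1 by (intro order_tendstoD) auto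
  then obtain T0 where T0: "\<And>t. norm t \<ge> T0 \<Longrightarrow> H(t*2)/H t > q"
    by (auto simp: eventually_at_infinity)
  define T where "T = max T0 1"
  have Tge: "T \<ge> 1" "T \<ge> T0" by (auto simp: T_def)
  have r: "H(t*2)/H t > q" if "\<bar>t\<bar> \<ge> T" for t using T0[of t] that Tge by auto
  have Hpos: "H t > 0" if "\<bar>t\<bar> \<ge> T" for t
  proof (rule ccontr)
    assume np: "\<not> H t > 0"
    have "H (t*2) \<ge> H t"
    proof (cases "t \<ge> 0")
      case True then show ?thesis by (intro monoR) auto
    next
      case False then show ?thesis by (intro monoL) auto
    qed
    hence "H (t*2) / H t \<le> 1" using np
      by (cases "H t = 0") (auto simp: divide_le_eq)
    then show False using r[OF that] q1 by linarith
  qed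
  have Hdbl: "H (t*2) \<ge> q * H t" if "\<bar>t\<bar> \<ge> T" for t
    using r[OF that] Hpos[OF that] by (simp add: pos_less_divide_eq less_imp_le)
  define m where "m = min (H T) (H (-T))"
  have mpos: "m > 0" using Hpos[of T] Hpos[of "-T"] Tge by (auto simp: m_def)
  have Hm: "H t \<ge> m" if "\<bar>t\<bar> \<ge> T" for t
  proof (cases "t \<ge> 0")
    case True
    then have "H T \<le> H t" using that Tge by (intro monoR) auto
    then show ?thesis by (simp add: m_def)
  next
    case False
    then have "H (-T) \<le> H t" using that Tge by (intro monoL) auto
    then show ?thesis by (simp add: m_def)
  qed
  define d where "d = (q-1)*m"
  have dpos: "d > 0" using q1 mpos by (simp add: d_def)
  have Hstep: "H (t*2) \<ge> H t + d" if "\<bar>t\<bar> \<ge> T" for t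
  proof -
    have "(q-1) * m \<le> (q-1) * H t" using Hm[OF that] q1 by (intro mult_left_mono) auto
    then show ?thesis using Hdbl[OF that] by (simp add: d_def algebra_simps)
  qed
  have Hn: "H x \<ge> real n * d" if "T * 2^n \<le> \<bar>x\<bar>" for n x
    using that
  proof (induction n arbitrary: x)
    case 0
    then show ?case using Hpos[of x] by simp
  next
    case (Suc n)
    have y: "T * 2^n \<le> \<bar>x/2\<bar>" using Suc.prems by simp
    have "T \<le> T * 2^n" using Tge by simp
    hence "\<bar>x/2\<bar> \<ge> T" using y by linarith
    from Hstep[OF this] Suc.IH[OF y] show ?case by (simp add: algebra_simps)
  qed
  define b where "b = 6 * ln 2 / d"
  have bpos: "b > 0" using dpos by (simp add: b_def)
  have expn: "exp(-b * H x) \<le> (1/64)^n" if "T*2^n \<le> \<bar>x\<bar>" for n x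
  proof -
    have "exp(-b * H x) \<le> exp(-b * (real n * d))"
      using Hn[OF that] bpos by simp
    also have "-b * (real n * d) = real n * (- (6 * ln 2))" using dpos by (simp add: b_def)
    also have "exp (real n * (- (6 * ln 2))) = exp (- (6 * ln 2)) ^ n" by (rule exp_of_nat_mult)
    also have "exp (- (6 * ln (2::real))) = 1/64"
    proof -
      have "exp (6 * ln (2::real)) = exp (ln 2) ^ 6" using exp_of_nat_mult[of 6 "ln (2::real)"] by simp
      also have "\<dots> = 64" by simp
      finally show ?thesis by (simp add: exp_minus)
    qed
    finally show ?thesis .
  qed
  have p64: "(64::real) ^ n = (2 ^ n) ^ 6" for n
  proof -
    have "(64::real) = 2^6" by simp
    then show ?thesis by (simp only: power_mult[symmetric] mult.commute)
  qed
  have far: "exp(-b * H x) \<le> 64 * T^6 / x^6" if "\<bar>x\<bar> \<ge> T" for x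
  proof -
    define y where "y = \<bar>x\<bar> / T"
    have y1: "y \<ge> 1" using that Tge by (simp add: y_def)
    define n where "n = nat \<lfloor>log 2 y\<rfloor>"
    have lg: "log 2 y \<ge> 0" using y1 by simp
    have n1: "real n \<le> log 2 y" using lg by (simp add: n_def)
    have n2: "log 2 y < real n + 1" using lg by (simp add: n_def)
    have "2 powr (real n) \<le> 2 powr (log 2 y)" using n1 by simp
    hence a1: "2^n \<le> y" using y1 by (simp add: powr_realpow)
    have "2 powr (log 2 y) < 2 powr (real n + 1)" using n2 by simp
    moreover have "2 powr (real (n+1)) = (2::real)^(n+1)" by (rule powr_realpow) simp
    ultimately have a2: "y < 2^(n+1)" using y1 by (simp add: add.commute)
    have "T * 2^n \<le> \<bar>x\<bar>" using a1 Tge by (simp add: y_def field_simps)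
    from expn[OF this] have "exp(-b * H x) \<le> (1/64)^n" .
    also have "(1/64::real)^n = 1/(2^n)^6" by (simp add: power_one_over p64)
    also have "\<dots> = 64 / (2^(n+1))^6" by (simp add: power_mult_distrib)
    also have "\<dots> \<le> 64 / y^6" using a2 y1
      by (intro divide_left_mono power_mono mult_pos_pos) auto
    also have "\<dots> = 64 * T^6 / x^6" using Tge by (simp add: y_def power_divide)
    finally show ?thesis .
  qed
  define G where "G x = indicator {1..} x * x powr (-2)
   + indicator {1..} (-x) * (-x) powr (-2) + (indicator {-1..1} x :: real)" for x :: real
  have Gnn: "G x \<ge> 0" for x by (simp add: G_def)
  have Gfar: "G x \<ge> \<bar>x\<bar> powr (-2)" if "\<bar>x\<bar> \<ge> 1" for x
    using that by (cases "x \<ge> 0") (auto simp: G_def indicator_def)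
  have Gnear: "G x \<ge> 1 / T^2" if "\<bar>x\<bar> \<le> T" for x
  proof (cases "\<bar>x\<bar> \<le> 1")
    case True
    hence "G x \<ge> 1" by (cases "x \<ge> 0") (auto simp: G_def indicator_def)
    moreover have "1 / T^2 \<le> 1" using Tge by simp
    ultimately show ?thesis by linarith
  next
    case False
    hence "G x \<ge> \<bar>x\<bar> powr (-2)" using Gfar by simp
    moreover have "\<bar>x\<bar> powr (-2) \<ge> T powr (-2)" using False that
      by (intro powr_mono2') auto
    moreover have "T powr (-2) = 1 / T^2" using Tge by (simp add: powr_minus powr_realpow divide_inverse)
    ultimately show ?thesis by linarith
  qed
  define K where "K = max (128 * T^6) ((1 + T^4) * exp (- b * H 0) * T^2)"
  have K1: "128 * T^6 \<le> K" "(1 + T^4) * exp (- b * H 0) * T^2 \<le> K" by (auto simp: K_def)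
  have K0: "0 \<le> K" using K1(1) Tge by (smt (verit) zero_le_power)
  have bound: "(1 + x^4) * exp (- b * H x) \<le> K * G x" for x
  proof (cases "\<bar>x\<bar> \<ge> T")
    case True
    have x1: "\<bar>x\<bar> \<ge> 1" using True Tge by linarith
    have "(1 + x^4) * exp (- b * H x) \<le> (2 * x^4) * (64 * T^6 / x^6)"
    proof (intro mult_mono)
      have "1 \<le> \<bar>x\<bar>^4" using x1 by (rule one_le_power)
      then have "1 \<le> x^4" by simp
      then show "1 + x^4 \<le> 2 * x^4" by simp
    qed (use far[OF True] in auto)
    also have "\<dots> = 128 * T^6 * (1 / x^2)"
    proof -
      have "x^6 = x^4 * x^2" by (simp add: power_add[symmetric])
      then show ?thesis using x1 by (simp add: field_simps power2_eq_square)
    qed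
    also have "1 / x^2 = \<bar>x\<bar> powr (-2)"
      using x1 by (simp add: powr_minus powr_numeral divide_inverse)
    also have "128 * T^6 * \<bar>x\<bar> powr (-2) \<le> K * G x"
      by (intro mult_mono Gfar x1) (use K0 K1 Gnn in auto)
    finally show ?thesis .
  next
    case False
    have "H x \<ge> H 0"
      by (cases "x \<ge> 0") (auto intro: monoR monoL)
    hence "exp (- b * H x) \<le> exp (- b * H 0)" using bpos by simp
    moreover have "\<bar>x\<bar>^4 \<le> T^4" using False by (intro power_mono) auto
    then have "1 + x^4 \<le> 1 + T^4" by simp
    ultimately have "(1 + x^4) * exp (- b * H x) \<le> (1 + T^4) * exp (- b * H 0)"
      by (intro mult_mono) auto
    also have "\<dots> = ((1 + T^4) * exp (- b * H 0) * T^2) * (1 / T^2)" using Tge by simp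
    also have "\<dots> \<le> K * G x"
      using Gnear[of x] False by (intro mult_mono) (use K0 K1 in auto)
    finally show ?thesis .
  qed
  have "integrable lborel (\<lambda>x. (1 + x^4) * exp (- b * H x))"
  proof (rule Bochner_Integration.integrable_bound[where f="\<lambda>x. K * G x"])
    show "integrable lborel (\<lambda>x. K * G x)" using integrable_G unfolding G_def by simp
    show "(\<lambda>x. (1 + x^4) * exp (- b * H x)) \<in> borel_measurable lborel" using meas by measurable
    show "AE x in lborel. norm ((1 + x^4) * exp (- b * H x)) \<le> norm (K * G x)"
      using bound Gnn K0 by (auto intro!: AE_I2 simp: abs_mult)
  qed
  with bpos show ?thesis by blast
qed

lemma gauss_int_base: "integrable lborel (\<lambda>x::real. (1 + x^4) * exp (-x\<^sup>2))"
proof -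
  have i0: "integrable lborel (\<lambda>x::real. exp (-x\<^sup>2) * x^(2*0))"
    using has_bochner_integral_even_function[OF gaussian_moment_even_pos[where k=0]]
    by (auto simp: integrable.intros)
  have i2: "integrable lborel (\<lambda>x::real. exp (-x\<^sup>2) * x^(2*2))"
    using has_bochner_integral_even_function[OF gaussian_moment_even_pos[where k=2]]
    by (auto intro: integrable.intros)
  have "integrable lborel (\<lambda>x::real. exp (-x\<^sup>2) * x^(2*0) + exp (-x\<^sup>2) * x^(2*2))"
    using i0 i2 by (rule Bochner_Integration.integrable_add)
  then show ?thesis by (simp add: algebra_simps)
qed

lemma gauss_int_k: assumes "k \<le> 4"
  shows "integrable lborel (\<lambda>x::real. \<bar>x\<bar>^k * exp (-x\<^sup>2))"
proof (rule Bochner_Integration.integrable_bound[OF gauss_int_base])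
  show "(\<lambda>x::real. \<bar>x\<bar>^k * exp (-x\<^sup>2)) \<in> borel_measurable lborel" by measurable
  have "\<bar>x\<bar>^k \<le> 1 + x^4" for x :: real
  proof (cases "\<bar>x\<bar> \<le> 1")
    case True
    then have "\<bar>x\<bar>^k \<le> 1" by (simp add: power_le_one)
    moreover have "0 \<le> x^4" by simp
    ultimately show ?thesis by linarith
  next
    case False
    then have "\<bar>x\<bar>^k \<le> \<bar>x\<bar>^4" using assms by (intro power_increasing) auto
    then show ?thesis by simp
  qed
  then have nb: "norm (\<bar>x\<bar>^k * exp (-x\<^sup>2)) \<le> norm ((1 + x^4) * exp (-x\<^sup>2))" for x :: real
    by (simp add: abs_mult mult_right_mono add_nonneg_nonneg)
  then show "AE x in lborel. norm (\<bar>x::real\<bar>^k * exp (-x\<^sup>2)) \<le> norm ((1 + x^4) * exp (-x\<^sup>2))"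
    using nb by (intro AE_I2)
qed

lemma gauss_scale:
  assumes "k \<le> 4" "a > (0::real)"
  shows "integrable lborel (\<lambda>x::real. \<bar>x\<bar>^k * exp (-a*x\<^sup>2))"
    and "(\<integral>x. \<bar>x\<bar>^k * exp (-a*x\<^sup>2) \<partial>lborel) = (\<integral>y. \<bar>y\<bar>^k * exp (-y\<^sup>2) \<partial>lborel) / sqrt a ^ (k+1)"
proof -
  have sa: "sqrt a > 0" using assms by simp
  have eq: "\<bar>x\<bar>^k * exp (-a*x\<^sup>2) = (1 / sqrt a ^ k) * (\<lambda>y. \<bar>y\<bar>^k * exp (-y\<^sup>2)) (0 + sqrt a * x)" for x
    using sa assms by (simp add: abs_mult power_mult_distrib)
  show "integrable lborel (\<lambda>x::real. \<bar>x\<bar>^k * exp (-a*x\<^sup>2))"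
    unfolding eq using lborel_integrable_real_affine[OF gauss_int_k[OF assms(1)], of "sqrt a" 0] sa
    by simp
  have "(\<integral>x. \<bar>x\<bar>^k * exp (-a*x\<^sup>2) \<partial>lborel) = \<bar>1 / sqrt a\<bar> *\<^sub>R (\<integral>y. \<bar>0 + 1/sqrt a * y\<bar>^k * exp (-a*(0 + 1/sqrt a * y)\<^sup>2) \<partial>lborel)"
    using sa by (intro lborel_integral_real_affine) auto
  also have "\<dots> = (1 / sqrt a) * (\<integral>y. (1 / sqrt a ^ k) * (\<bar>y\<bar>^k * exp (-y\<^sup>2)) \<partial>lborel)"
    using sa assms by (simp add: abs_mult power_mult_distrib power_divide power2_eq_square)
  also have "\<dots> = (\<integral>y. \<bar>y\<bar>^k * exp (-y\<^sup>2) \<partial>lborel) / sqrt a ^ (k+1)"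
    by simp
  finally show "(\<integral>x. \<bar>x\<bar>^k * exp (-a*x\<^sup>2) \<partial>lborel) = (\<integral>y. \<bar>y\<bar>^k * exp (-y\<^sup>2) \<partial>lborel) / sqrt a ^ (k+1)" .
qed

lemma pow_le_1_x4: assumes "k \<le> 4" shows "\<bar>x::real\<bar>^k \<le> 1 + x^4"
proof (cases "\<bar>x\<bar> \<le> 1")
  case True
  then have "\<bar>x\<bar>^k \<le> 1" by (simp add: power_le_one)
  moreover have "0 \<le> x^4" by simp
  ultimately show ?thesis by linarith
next
  case False
  then have "\<bar>x\<bar>^k \<le> \<bar>x\<bar>^4" using assms by (intro power_increasing) auto
  then show ?thesis by simp
qed

lemma exp_cube: assumes "x \<ge> 0" shows "x^3 / 27 \<le> exp (x::real)"
proof -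
  have "exp x = exp (x/3) ^ 3" using exp_of_nat_mult[of 3 "x/3"] by simp
  moreover have "x/3 \<le> exp (x/3)" using exp_ge_add_one_self[of "x/3"] by linarith
  hence "(x/3)^3 \<le> exp (x/3) ^ 3" using assms by (intro power_mono) auto
  ultimately show ?thesis by (simp add: power_divide)
qed

lemma laplace:
  fixes u :: "real \<Rightarrow> real" and c \<delta> \<eta> b :: real
  assumes umeas[measurable]: "u \<in> borel_measurable borel"
    and c: "c > 0" and \<delta>: "\<delta> > 0" and \<eta>: "\<eta> > 0" and b: "b > 0"
    and near: "\<And>x. \<bar>x\<bar> \<le> \<delta> \<Longrightarrow> -c*x\<^sup>2 \<le> u x \<and> u x \<le> -(c/4)*x\<^sup>2"
    and tail: "\<And>x. \<delta> \<le> \<bar>x\<bar> \<Longrightarrow> u x \<le> -\<eta>"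
    and unp: "\<And>x. u x \<le> 0"
    and I0: "integrable lborel (\<lambda>x. (1+x^4) * exp(b * u x))"
  shows "\<exists>\<beta>1\<ge>1. \<exists>C. \<forall>\<beta>\<ge>\<beta>1. \<forall>k\<le>4. integrable lborel (\<lambda>x. \<bar>x\<bar>^k * exp(\<beta> * u x))
      \<and> (\<integral>x. exp(\<beta> * u x) \<partial>lborel) > 0
      \<and> (\<integral>x. \<bar>x\<bar>^k * exp(\<beta> * u x) \<partial>lborel) / (\<integral>x. exp(\<beta> * u x) \<partial>lborel) \<le> C k / sqrt \<beta> ^ k"
proof -
  define Ib where "Ib = (\<integral>x. (1+x^4) * exp(b * u x) \<partial>lborel)"
  have Ib0: "Ib \<ge> 0" unfolding Ib_def by (intro integral_nonneg_AE AE_I2) (simp add: add_nonneg_nonneg)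
  define Gk where "Gk k = (\<integral>y. \<bar>y::real\<bar>^k * exp (-y\<^sup>2) \<partial>lborel)" for k :: nat
  have Gk0: "Gk k \<ge> 0" for k unfolding Gk_def by (intro integral_nonneg_AE AE_I2) simp
  define \<beta>1 where "\<beta>1 = max (max 1 (b+1)) (1/(c*\<delta>\<^sup>2))"
  define z0 where "z0 = 2*exp(-1)/sqrt c"
  have z0: "z0 > 0" using c by (simp add: z0_def)
  define A where "A k = Gk k * (2/sqrt c)^(k+1)" for k
  have A0: "A k \<ge> 0" for k using Gk0 c by (simp add: A_def)
  define B where "B = 27 * exp(b*\<eta>) * Ib / \<eta>^3"
  have B0: "B \<ge> 0" using Ib0 \<eta> by (simp add: B_def)
  define C where "C k = (A k + B)/z0" for k
  have main: "integrable lborel (\<lambda>x. \<bar>x\<bar>^k * exp(\<beta> * u x))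
      \<and> (\<integral>x. exp(\<beta> * u x) \<partial>lborel) > 0
      \<and> (\<integral>x. \<bar>x\<bar>^k * exp(\<beta> * u x) \<partial>lborel) / (\<integral>x. exp(\<beta> * u x) \<partial>lborel) \<le> C k / sqrt \<beta> ^ k"
    if \<beta>: "\<beta> \<ge> \<beta>1" and k: "k \<le> 4" for \<beta> k
  proof -
    have \<beta>ge: "\<beta> \<ge> 1" "\<beta> \<ge> b + 1" "\<beta> \<ge> 1/(c*\<delta>\<^sup>2)" using \<beta> by (auto simp: \<beta>1_def)
    define s where "s = sqrt \<beta>"
    have s1: "s \<ge> 1" using \<beta>ge by (simp add: s_def)
    have s2: "s^2 = \<beta>" using \<beta>ge by (simp add: s_def)
    have dom: "\<bar>\<bar>x\<bar>^j * exp(\<beta> * u x)\<bar> \<le> \<bar>(1+x^4) * exp(b * u x)\<bar>" if "j \<le> 4" for x and j :: nat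
    proof -
      have "exp(\<beta> * u x) \<le> exp(b * u x)" using unp[of x] \<beta>ge by (simp add: mult_right_mono_neg)
      then show ?thesis using pow_le_1_x4[OF that, of x]
        by (simp add: abs_mult add_nonneg_nonneg mult_mono)
    qed
    have integ: "integrable lborel (\<lambda>x. \<bar>x\<bar>^j * exp(\<beta> * u x))" if "j \<le> 4" for j :: nat
      by (rule Bochner_Integration.integrable_bound[OF I0]) (measurable, use dom[OF that] in auto)
    have integ0: "integrable lborel (\<lambda>x. exp(\<beta> * u x))" using integ[of 0] by simp
    define r where "r = 1/(s * sqrt c)"
    have r0: "r > 0" using s1 c unfolding r_def by (intro divide_pos_pos mult_pos_pos) auto
    have r2': "r^2 = 1/(\<beta>*c)"
    proof -
      have "r^2 = 1 / (s^2 * (sqrt c)^2)" unfolding r_def by (simp add: power_divide power_mult_distrib)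
      also have "(sqrt c)^2 = c" using c by simp
      finally show ?thesis using s2 by simp
    qed
    have bc: "\<beta>*c > 0" using \<beta>ge c by simp
    have r2: "\<beta> * c * r^2 = 1" unfolding r2' using bc c \<beta>ge(1) by simp
    have "r^2 \<le> \<delta>^2"
    proof -
      have cd: "c*\<delta>\<^sup>2 > 0" using c \<delta> by simp
      have "1 \<le> \<beta> * (c*\<delta>\<^sup>2)" using \<beta>ge(3) by (simp only: pos_divide_le_eq[OF cd])
      hence "1 \<le> \<delta>^2 * (\<beta>*c)" by (simp only: mult_ac)
      hence "1/(\<beta>*c) \<le> \<delta>^2" by (simp only: pos_divide_le_eq[OF bc])
      then show ?thesis unfolding r2' .
    qed
    hence r\<delta>: "r \<le> \<delta>" by (rule power2_le_imp_le) (use \<delta> in linarith)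
    have Zlow: "z0 / s \<le> (\<integral>x. exp(\<beta> * u x) \<partial>lborel)"
    proof -
      have "(\<integral>x. indicator {-r..r} x * exp(-1) \<partial>lborel) \<le> (\<integral>x. exp(\<beta> * u x) \<partial>lborel)"
      proof (rule integral_mono'[OF integ0])
        fix x :: real
        show "0 \<le> exp(\<beta> * u x)" by simp
        show "indicator {-r..r} x * exp(-1) \<le> exp(\<beta> * u x)"
        proof (cases "\<bar>x\<bar> \<le> r")
          case True
          have "-c*x\<^sup>2 \<le> u x" using near[of x] True r\<delta> by auto
          moreover have "\<bar>x\<bar>\<^sup>2 \<le> r\<^sup>2" using True by (intro power_mono) auto
          hence "c*x\<^sup>2 \<le> c*r\<^sup>2" using c by (intro mult_left_mono) auto
          ultimately have "-c*r\<^sup>2 \<le> u x" by linarith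
          hence "\<beta> * (-c*r\<^sup>2) \<le> \<beta> * u x" using \<beta>ge by (intro mult_left_mono) auto
          hence "-1 \<le> \<beta> * u x" using r2 by (simp add: algebra_simps)
          then show ?thesis by (simp add: indicator_def)
        next
          case False then show ?thesis by (auto simp: indicator_def)
        qed
      qed
      also have "(\<integral>x. indicator {-r..r} x * exp(-1) \<partial>lborel) = 2 * r * exp(-1)"
        using r0 by simp
      finally show ?thesis using s1 c by (simp add: z0_def r_def mult.commute)
    qed
    have Zpos: "(\<integral>x. exp(\<beta> * u x) \<partial>lborel) > 0"
      using Zlow z0 s1 by (smt (verit) divide_pos_pos)
    define a where "a = \<beta> * c / 4"
    have a0: "a > 0" using \<beta>ge c by (simp add: a_def)
    have sa: "sqrt a = s * sqrt c / 2"
      using \<beta>ge c by (simp add: a_def s_def real_sqrt_mult real_sqrt_divide)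
    have Jpt: "\<bar>x\<bar>^k * exp(\<beta> * u x) \<le> \<bar>x\<bar>^k * exp (-a*x\<^sup>2) + exp(-(\<beta>-b)*\<eta>) * ((1+x^4) * exp(b * u x))" for x
    proof (cases "\<bar>x\<bar> \<le> \<delta>")
      case True
      have "u x \<le> -(c/4)*x\<^sup>2" using near[OF True] by simp
      hence "\<beta> * u x \<le> \<beta> * (-(c/4)*x\<^sup>2)" using \<beta>ge by (intro mult_left_mono) auto
      hence "\<beta> * u x \<le> -a*x\<^sup>2" by (simp add: a_def)
      hence "\<bar>x\<bar>^k * exp(\<beta> * u x) \<le> \<bar>x\<bar>^k * exp (-a*x\<^sup>2)" by (intro mult_left_mono) auto
      moreover have "0 \<le> exp(-(\<beta>-b)*\<eta>) * ((1+x^4) * exp(b * u x))" by (simp add: add_nonneg_nonneg)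
      ultimately show ?thesis by linarith
    next
      case False
      have "u x \<le> -\<eta>" using tail[of x] False by simp
      hence "(\<beta>-b) * u x \<le> (\<beta>-b) * (-\<eta>)" using \<beta>ge by (intro mult_left_mono) auto
      hence "(\<beta>-b) * u x \<le> -(\<beta>-b)*\<eta>" by (simp add: algebra_simps)
      hence "exp((\<beta>-b) * u x) \<le> exp(-(\<beta>-b)*\<eta>)" by simp
      moreover have "exp(\<beta> * u x) = exp((\<beta>-b) * u x) * exp(b * u x)" by (simp add: exp_add[symmetric] algebra_simps)
      ultimately have "exp(\<beta> * u x) \<le> exp(-(\<beta>-b)*\<eta>) * exp(b * u x)" by (simp add: mult_right_mono)
      hence "\<bar>x\<bar>^k * exp(\<beta> * u x) \<le> (1+x^4) * (exp(-(\<beta>-b)*\<eta>) * exp(b * u x))"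
        using pow_le_1_x4[OF k, of x] by (intro mult_mono) (auto simp: add_nonneg_nonneg)
      moreover have "0 \<le> \<bar>x\<bar>^k * exp (-a*x\<^sup>2)" by simp
      moreover have "(1+x^4) * (exp(-(\<beta>-b)*\<eta>) * exp(b * u x)) = exp(-(\<beta>-b)*\<eta>) * ((1+x^4) * exp(b * u x))" by (simp only: mult_ac)
      ultimately show ?thesis by linarith
    qed
    have gi: "integrable lborel (\<lambda>x. \<bar>x\<bar>^k * exp (-a*x\<^sup>2))" by (rule gauss_scale(1)[OF k a0])
    have J1: "(\<integral>x. \<bar>x\<bar>^k * exp(\<beta> * u x) \<partial>lborel)
        \<le> (\<integral>x. \<bar>x\<bar>^k * exp (-a*x\<^sup>2) + exp(-(\<beta>-b)*\<eta>) * ((1+x^4) * exp(b * u x)) \<partial>lborel)"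
      by (rule integral_mono'[OF Bochner_Integration.integrable_add[OF gi integrable_mult_right[OF I0]]])
         (use Jpt in \<open>auto simp: add_nonneg_nonneg\<close>)
    also have "\<dots> = Gk k / sqrt a ^ (k+1) + exp(-(\<beta>-b)*\<eta>) * Ib"
      using gauss_scale(2)[OF k a0] gi I0 by (simp add: Gk_def Ib_def)
    also have "Gk k / sqrt a ^ (k+1) = A k / s^(k+1)"
    proof -
      have sa': "sqrt a = s * (sqrt c / 2)" using sa by simp
      have sc: "sqrt c > 0" using c by simp
      have "Gk k / sqrt a ^ (k+1) = Gk k / (s^(k+1) * (sqrt c / 2)^(k+1))" by (simp only: sa' power_mult_distrib)
      also have "\<dots> = Gk k * (2 / sqrt c)^(k+1) / s^(k+1)" using sc s1 by (simp add: power_divide)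
      finally show ?thesis by (simp add: A_def)
    qed
    also have "exp(-(\<beta>-b)*\<eta>) * Ib \<le> B / s^6"
    proof -
      have e: "exp(-(\<beta>-b)*\<eta>) = exp(b*\<eta>) / exp(\<beta>*\<eta>)"
        proof -
          have "-(\<beta>-b)*\<eta> = b*\<eta> - \<beta>*\<eta>" by (simp add: algebra_simps)
          then show ?thesis by (simp add: exp_diff)
        qed
      have "(\<beta>*\<eta>)^3/27 \<le> exp(\<beta>*\<eta>)" using \<beta>ge \<eta> by (intro exp_cube) simp
      moreover have "(\<beta>*\<eta>)^3 = s^6 * \<eta>^3"
      proof -
        have "s^6 = (s^2)^3" by (simp add: power_mult[symmetric])
        then show ?thesis using s2 by (simp add: power_mult_distrib)
      qed
      ultimately have "s^6 * \<eta>^3 / 27 \<le> exp(\<beta>*\<eta>)" by simp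
      hence "exp(b*\<eta>) / exp(\<beta>*\<eta>) \<le> exp(b*\<eta>) / (s^6 * \<eta>^3 / 27)"
        using s1 \<eta> by (intro divide_left_mono) auto
      hence "exp(-(\<beta>-b)*\<eta>) * Ib \<le> exp(b*\<eta>) / (s^6 * \<eta>^3 / 27) * Ib"
        unfolding e using Ib0 by (intro mult_right_mono)
      also have "\<dots> = B / s^6" by (simp add: B_def field_simps)
      finally show ?thesis .
    qed
    finally have Jup: "(\<integral>x. \<bar>x\<bar>^k * exp(\<beta> * u x) \<partial>lborel) \<le> A k / s^(k+1) + B / s^6" by simp
    define J where "J = (\<integral>x. \<bar>x\<bar>^k * exp(\<beta> * u x) \<partial>lborel)"
    define Z where "Z = (\<integral>x. exp(\<beta> * u x) \<partial>lborel)"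
    have J0: "J \<ge> 0" unfolding J_def by (intro integral_nonneg_AE AE_I2) simp
    have "J / Z \<le> J / (z0 / s)" using Zlow Zpos z0 s1 J0 unfolding Z_def
      by (intro divide_left_mono) auto
    also have "\<dots> = J * s / z0" by simp
    also have "\<dots> \<le> (A k / s^(k+1) + B / s^6) * s / z0"
      using Jup s1 z0 unfolding J_def by (intro divide_right_mono mult_right_mono) auto
    also have "\<dots> = (A k / s^k + B / s^5) / z0"
    proof -
      have sn: "s \<noteq> 0" using s1 by simp
      have p1a: "s^(k+1) = s^k * s" by (simp only: power_add power_one_right)
      have "s^6 = s^(5+1)" by simp
      then have p1b: "s^6 = s^5 * s" by (simp only: power_add power_one_right)
      note p1 = p1a p1b
      have "A k / s^(k+1) * s = A k / s^k" "B / s^6 * s = B / s^5" unfolding p1 using sn by simp_all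
      then show ?thesis by (simp add: distrib_right)
    qed
    also have "\<dots> \<le> (A k / s^k + B / s^k) / z0"
    proof -
      have "s^k \<le> s^5" using s1 k by (intro power_increasing) auto
      hence "B / s^5 \<le> B / s^k" using B0 s1 by (intro divide_left_mono) auto
      then show ?thesis using z0 by (intro divide_right_mono) auto
    qed
    also have "\<dots> = C k / s^k" by (simp add: C_def add_divide_distrib mult.commute)
    finally show ?thesis using integ[OF k] Zpos unfolding J_def Z_def s_def by simp
  qed
  have "\<beta>1 \<ge> 1" by (simp add: \<beta>1_def)
  then show ?thesis using main by blast
qed

lemma final_arith:
  fixes R K \<beta> :: real and n :: nat
  assumes b: "\<beta> \<ge> 1" and R: "\<bar>R\<bar> \<le> K / sqrt \<beta> ^ n"
  shows "\<bar>R / (4*\<beta>)\<bar> \<le> (K/4) * (1 / sqrt \<beta> ^ (n+2))"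
proof -
  have bp: "\<beta> > 0" using b by simp
  have "\<bar>R / (4*\<beta>)\<bar> = \<bar>R\<bar> / (4*\<beta>)" using bp by (simp add: abs_divide)
  also have "\<dots> \<le> (K / sqrt \<beta> ^ n) / (4*\<beta>)" using R bp by (intro divide_right_mono) auto
  also have "sqrt \<beta> ^ (n+2) = sqrt \<beta> ^ n * \<beta>" using bp by (simp add: power_add)
  hence "(K / sqrt \<beta> ^ n) / (4*\<beta>) = (K/4) * (1 / sqrt \<beta> ^ (n+2))" by (simp only:) (simp add: field_simps)
  finally show ?thesis .
qed

lemma pw3: "\<beta> > 0 \<Longrightarrow> \<beta> powr (-3) = 1 / sqrt \<beta> ^ (4+2)"
proof -
  assume bp: "\<beta> > 0"
  have "sqrt \<beta> ^ (4+2) = (sqrt \<beta> ^ 2) ^ 3" by (simp add: power_mult[symmetric])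
  also have "\<dots> = \<beta> ^ 3" using bp by simp
  finally have "sqrt \<beta> ^ (4+2) = \<beta> ^ 3" .
  moreover have "\<beta> powr (-3) = 1 / \<beta> powr 3" using bp by (simp add: powr_minus_divide)
  moreover have "\<beta> powr 3 = \<beta> ^ 3" using bp by (simp add: powr_numeral)
  ultimately show ?thesis by simp
qed

lemma pw52: "\<beta> > 0 \<Longrightarrow> \<beta> powr (-(5/2)) = 1 / sqrt \<beta> ^ (3+2)"
proof -
  assume bp: "\<beta> > 0"
  have "sqrt \<beta> ^ (3+2) = sqrt \<beta> ^ (2*2+1)" by simp
  also have "\<dots> = (sqrt \<beta> ^ 2) ^ 2 * sqrt \<beta>" by (simp only: power_add power_mult power_one_right)
  also have "\<dots> = \<beta> ^ 2 * sqrt \<beta>" using bp by simp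
  finally have a: "sqrt \<beta> ^ (3+2) = \<beta> ^ 2 * sqrt \<beta>" .
  have "\<beta> powr (5/2) = \<beta> powr (2 + 1/2)" by simp
  also have "\<dots> = \<beta> powr 2 * \<beta> powr (1/2)" using bp by (simp only: powr_add)
  also have "\<dots> = \<beta> ^ 2 * sqrt \<beta>" using bp by (simp add: powr_half_sqrt powr_numeral)
  finally have "\<beta> powr (5/2) = sqrt \<beta> ^ (3+2)" using a by simp
  moreover have "\<beta> powr (-(5/2)) = 1 / \<beta> powr (5/2)" using bp by (simp add: powr_minus_divide)
  ultimately show ?thesis by simp
qed

theorem lemma5:
  fixes f H :: "real \<Rightarrow> real" and M :: real
  assumes pos: "\<And>x. f x > 0"
    and C4: "C4 f"
    and unimodal: "unimodal_at0 f"
    and H: "\<And>x. f x = exp (- H x)"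
    and regvar: "regularly_varying H"
    and M: "M > 0" "\<And>x. \<bar>(deriv ^^ 4) (logf f) x\<bar> < M"
    and curv: "(deriv ^^ 2) (logf f) 0 < 0"
    and var: "\<exists>\<gamma>>0. (\<lambda>\<beta>. \<bar>dvar (gbeta f \<beta>) (\<lambda>y. y\<^sup>2) - 2\<bar>) \<in> O[at_top](\<lambda>\<beta>. \<beta> powr (- \<gamma>))"
  shows "(\<lambda>\<beta>. Rfun f \<beta> / (4 * \<beta>)) \<in>
           O[at_top](\<lambda>\<beta>. \<beta> powr (- (if (deriv ^^ 3) (logf f) 0 = 0 then 3 else 5 / 2)))"
proof -
  define h where "h = logf f"
  define D where "D n = (deriv ^^ n) h" for n
  have dD: "\<And>m x. m \<le> 3 \<Longrightarrow> (D m has_real_derivative D (Suc m) x) (at x)"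
    unfolding D_def h_def by (rule derivs_logf[OF pos C4])
  have D0: "D 0 = h" by (simp add: D_def)
  have hx: "h x = ln (f x)" for x by (simp add: h_def logf_def)
  have hH: "h x = - H x" for x using H[of x] by (simp add: hx)
  have hder: "(h has_real_derivative D 1 x) (at x)" for x using dD[of 0 x] D0 by simp
  have hcont: "continuous_on UNIV h"
    by (rule continuous_at_imp_continuous_on) (use hder DERIV_isCont in blast)
  have mon: "mono_on {..0} f" and amon: "antimono_on {0..} f"
    using unimodal by (auto simp: unimodal_at0_def)
  have hR: "h y \<le> h x" if "0 \<le> x" "x \<le> y" for x y
  proof -
    have "f y \<le> f x" using monotone_onD[OF amon, of x y] that by auto
    then show ?thesis using pos[of x] pos[of y] by (simp add: hx)
  qed
  have hL: "h x \<le> h y" if "x \<le> y" "y \<le> 0" for x y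
  proof -
    have "f x \<le> f y" using mono_onD[OF mon, of x y] that by auto
    then show ?thesis using pos[of x] pos[of y] by (simp add: hx)
  qed
  have hmax: "h x \<le> h 0" for x
    by (cases "x \<le> 0") (auto intro: hL hR)
  have D10: "D 1 0 = 0"
    by (rule DERIV_local_max[OF hder[of 0], of 1]) (use hmax in auto)
  define c where "c = - D 2 0"
  have c: "c > 0" using curv by (simp add: c_def D_def h_def)
  have D2cont: "isCont (D 2) 0" using dD[of 2 0] DERIV_isCont by simp
  obtain \<delta>0 where \<delta>0: "\<delta>0 > 0" "\<And>t. t \<noteq> 0 \<and> norm (t - 0) < \<delta>0 \<Longrightarrow> norm (D 2 t - D 2 0) < c/2"
    using D2cont[unfolded isCont_def LIM_eq] c by (meson half_gt_zero)
  define \<delta> where "\<delta> = \<delta>0/2"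
  have \<delta>: "\<delta> > 0" using \<delta>0 by (simp add: \<delta>_def)
  have D2b: "-2*c \<le> D 2 t \<and> D 2 t \<le> -(c/2)" if "\<bar>t\<bar> \<le> \<delta>" for t
  proof (cases "t = 0")
    case True then show ?thesis using c by (simp add: c_def)
  next
    case False
    then have "\<bar>D 2 t - D 2 0\<bar> < c/2" using \<delta>0(2)[of t] that \<delta>0(1) by (simp add: \<delta>_def)
    then show ?thesis using c by (simp add: c_def abs_less_iff)
  qed
  have near: "-c*x\<^sup>2 \<le> h x - h 0 \<and> h x - h 0 \<le> -(c/4)*x\<^sup>2" if "\<bar>x\<bar> \<le> \<delta>" for x
  proof -
    obtain t where t: "\<bar>t\<bar> \<le> \<bar>x\<bar>" "D 0 x = D 0 0 + D 2 t / 2 * x^2"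
      using taylor_h[OF dD D10, of x] by blast
    have e: "h x - h 0 = D 2 t / 2 * x\<^sup>2" using t(2) D0 by simp
    have b: "-2*c \<le> D 2 t" "D 2 t \<le> -(c/2)" using D2b[of t] t(1) that by auto
    have x2: "x\<^sup>2 \<ge> 0" by simp
    have "-c*x\<^sup>2 \<le> D 2 t / 2 * x\<^sup>2" using b(1) x2 by (intro mult_right_mono) auto
    moreover have "D 2 t / 2 * x\<^sup>2 \<le> -(c/4)*x\<^sup>2" using b(2) x2 by (intro mult_right_mono) auto
    ultimately show ?thesis unfolding e by simp
  qed
  define \<eta> where "\<eta> = c*\<delta>\<^sup>2/4"
  have \<eta>: "\<eta> > 0" using c \<delta> by (simp add: \<eta>_def)
  have tail: "h x - h 0 \<le> -\<eta>" if "\<delta> \<le> \<bar>x\<bar>" for x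
  proof (cases "x \<ge> 0")
    case True
    have "h x \<le> h \<delta>" using hR[of \<delta> x] True that \<delta> by auto
    moreover have "h \<delta> - h 0 \<le> -(c/4)*\<delta>\<^sup>2" using near[of \<delta>] \<delta> by simp
    ultimately show ?thesis by (simp add: \<eta>_def)
  next
    case False
    have "h x \<le> h (-\<delta>)" using hL[of x "-\<delta>"] False that \<delta> by auto
    moreover have "h (-\<delta>) - h 0 \<le> -(c/4)*\<delta>\<^sup>2" using near[of "-\<delta>"] \<delta> by simp
    ultimately show ?thesis by (simp add: \<eta>_def)
  qed
  have Hmeas: "H \<in> borel_measurable borel"
  proof -
    have "continuous_on UNIV (\<lambda>x. - h x)" using hcont by (intro continuous_intros)
    moreover have "(\<lambda>x. - h x) = H" using hH by (simp add: fun_eq_iff)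
    ultimately show ?thesis by (metis borel_measurable_continuous_onI)
  qed
  obtain b where b: "b > 0" "integrable lborel (\<lambda>x. (1 + x^4) * exp (- b * H x))"
  proof -
    have "\<exists>b>0. integrable lborel (\<lambda>x. (1 + x^4) * exp (- b * H x))"
    proof (rule regvar_integrable[OF regvar _ _ Hmeas])
      show "H x \<le> H y" if "0 \<le> x" "x \<le> y" for x y using hR[OF that] hH[of x] hH[of y] by simp
      show "H y \<le> H x" if "x \<le> y" "y \<le> 0" for x y using hL[OF that] hH[of x] hH[of y] by simp
    qed
    then show ?thesis using that by blast
  qed
  define u where "u x = h x - h 0" for x
  have umeas: "u \<in> borel_measurable borel"
  proof -
    have "continuous_on UNIV u" unfolding u_def using hcont by (intro continuous_intros)
    then show ?thesis by (rule borel_measurable_continuous_onI)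
  qed
  have I0: "integrable lborel (\<lambda>x. (1+x^4) * exp(b * u x))"
  proof -
    have "(\<lambda>x. (1+x^4) * exp(b * u x)) = (\<lambda>x. exp (- b * h 0) * ((1 + x^4) * exp (- b * H x)))"
      by (auto simp: fun_eq_iff u_def hH exp_add[symmetric] algebra_simps)
    then show ?thesis using b(2) by simp
  qed
  obtain \<beta>1 C where \<beta>1: "\<beta>1 \<ge> 1"
    and LP: "\<And>\<beta> k. \<beta> \<ge> \<beta>1 \<Longrightarrow> k \<le> 4 \<Longrightarrow> integrable lborel (\<lambda>x. \<bar>x\<bar>^k * exp(\<beta> * u x))
      \<and> (\<integral>x. exp(\<beta> * u x) \<partial>lborel) > 0
      \<and> (\<integral>x. \<bar>x\<bar>^k * exp(\<beta> * u x) \<partial>lborel) / (\<integral>x. exp(\<beta> * u x) \<partial>lborel) \<le> C k / sqrt \<beta> ^ k"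
    using laplace[OF umeas c \<delta> \<eta> b(1) _ _ _ I0] near tail hmax unfolding u_def by (smt (verit))
  have M4: "\<bar>D 4 x\<bar> \<le> M" for x using M(2)[of x] by (simp add: D_def h_def)
  define A3 where "A3 = \<bar>D 3 0\<bar> / 2"
  have A3: "A3 \<ge> 0" by (simp add: A3_def)
  define g where "g x = x\<^sup>2 * (deriv ^^ 2) (logf f) x - x * deriv (logf f) x" for x
  have gD: "g x = x\<^sup>2 * D 2 x - x * D 1 x" for x by (simp add: g_def D_def h_def)
  have gb: "\<bar>g x\<bar> \<le> A3 * \<bar>x\<bar>^3 + M * \<bar>x\<bar>^4" for x
  proof -
    have t: "\<bar>x\<^sup>2 * D 2 x - x * D 1 x - D 3 0 / 2 * x ^ 3\<bar> \<le> M * x ^ 4"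
      by (rule taylor_pt[OF dD M4 D10])
    have "\<bar>D 3 0 / 2 * x ^ 3\<bar> = A3 * \<bar>x\<bar>^3" by (simp add: A3_def abs_mult power_abs)
    moreover have "x^4 = \<bar>x\<bar>^4" by simp
    moreover have "\<bar>x\<^sup>2 * D 2 x - x * D 1 x\<bar> \<le> \<bar>x\<^sup>2 * D 2 x - x * D 1 x - D 3 0 / 2 * x ^ 3\<bar> + \<bar>D 3 0 / 2 * x ^ 3\<bar>"
      using abs_triangle_ineq[of "x\<^sup>2 * D 2 x - x * D 1 x - D 3 0 / 2 * x ^ 3" "D 3 0 / 2 * x ^ 3"] by simp
    ultimately show ?thesis unfolding gD using t by simp
  qed
  have Rb: "\<bar>Rfun f \<beta>\<bar> \<le> A3 * (C 3 / sqrt \<beta> ^ 3) + M * (C 4 / sqrt \<beta> ^ 4)" if \<beta>: "\<beta> \<ge> \<beta>1" for \<beta>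
  proof -
    have L3: "integrable lborel (\<lambda>x. \<bar>x\<bar>^3 * exp(\<beta> * u x))"
      "(\<integral>x. \<bar>x\<bar>^3 * exp(\<beta> * u x) \<partial>lborel) / (\<integral>x. exp(\<beta> * u x) \<partial>lborel) \<le> C 3 / sqrt \<beta> ^ 3"
      using LP[OF \<beta>, of 3] by auto
    have L4: "integrable lborel (\<lambda>x. \<bar>x\<bar>^4 * exp(\<beta> * u x))"
      "(\<integral>x. exp(\<beta> * u x) \<partial>lborel) > 0"
      "(\<integral>x. \<bar>x\<bar>^4 * exp(\<beta> * u x) \<partial>lborel) / (\<integral>x. exp(\<beta> * u x) \<partial>lborel) \<le> C 4 / sqrt \<beta> ^ 4"
      using LP[OF \<beta>, of 4] by auto
    define Z where "Z = (\<integral>x. exp(\<beta> * u x) \<partial>lborel)"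
    define J3 where "J3 = (\<integral>x. \<bar>x\<bar>^3 * exp(\<beta> * u x) \<partial>lborel)"
    define J4 where "J4 = (\<integral>x. \<bar>x\<bar>^4 * exp(\<beta> * u x) \<partial>lborel)"
    have Zp: "Z > 0" using L4(2) by (simp add: Z_def)
    have fp: "f x powr \<beta> = exp(\<beta> * h 0) * exp(\<beta> * u x)" for x
    proof -
      have "f x powr \<beta> = exp (\<beta> * h x)" using pos[of x] by (simp add: powr_def hx mult.commute)
      also have "\<dots> = exp(\<beta> * h 0) * exp(\<beta> * u x)" by (simp add: u_def exp_add[symmetric] algebra_simps)
      finally show ?thesis .
    qed
    define N where "N = (\<integral>x. g x * exp(\<beta> * u x) \<partial>lborel)"
    have num: "(\<integral>x. g x * f x powr \<beta> \<partial>lborel) = exp(\<beta> * h 0) * N"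
    proof -
      have "(\<lambda>x. g x * f x powr \<beta>) = (\<lambda>x. exp(\<beta> * h 0) * (g x * exp(\<beta> * u x)))"
        by (simp add: fun_eq_iff fp mult_ac)
      then show ?thesis by (simp add: N_def)
    qed
    have den: "(\<integral>x. f x powr \<beta> \<partial>lborel) = exp(\<beta> * h 0) * Z"
      by (simp add: fp Z_def)
    have RN: "Rfun f \<beta> = N / Z"
      unfolding Rfun_def Ebeta_def using num den by (simp add: g_def[symmetric])
    have "\<bar>N\<bar> \<le> (\<integral>x. \<bar>g x * exp(\<beta> * u x)\<bar> \<partial>lborel)"
      using integral_norm_bound[of lborel "\<lambda>x. g x * exp(\<beta> * u x)"] by (simp add: N_def)
    also have "\<dots> \<le> (\<integral>x. A3 * (\<bar>x\<bar>^3 * exp(\<beta> * u x)) + M * (\<bar>x\<bar>^4 * exp(\<beta> * u x)) \<partial>lborel)"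
    proof (rule integral_mono')
      show "integrable lborel (\<lambda>x. A3 * (\<bar>x\<bar>^3 * exp(\<beta> * u x)) + M * (\<bar>x\<bar>^4 * exp(\<beta> * u x)))"
        using L3(1) L4(1) by simp
      fix x :: real
      have "\<bar>g x * exp(\<beta> * u x)\<bar> = \<bar>g x\<bar> * exp(\<beta> * u x)" by (simp add: abs_mult)
      also have "\<dots> \<le> (A3 * \<bar>x\<bar>^3 + M * \<bar>x\<bar>^4) * exp(\<beta> * u x)" using gb[of x] by (intro mult_right_mono) auto
      finally show "\<bar>g x * exp(\<beta> * u x)\<bar> \<le> A3 * (\<bar>x\<bar>^3 * exp(\<beta> * u x)) + M * (\<bar>x\<bar>^4 * exp(\<beta> * u x))"
        by (simp add: algebra_simps)
      show "0 \<le> A3 * (\<bar>x\<bar>^3 * exp(\<beta> * u x)) + M * (\<bar>x\<bar>^4 * exp(\<beta> * u x))"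
        using A3 M(1) by (intro add_nonneg_nonneg mult_nonneg_nonneg) auto
    qed
    also have "\<dots> = A3 * J3 + M * J4" using L3(1) L4(1) by (simp add: J3_def J4_def)
    finally have Nb: "\<bar>N\<bar> \<le> A3 * J3 + M * J4" .
    have "\<bar>Rfun f \<beta>\<bar> = \<bar>N\<bar> / Z" using Zp by (simp add: RN abs_divide)
    also have "\<dots> \<le> (A3 * J3 + M * J4) / Z" using Nb Zp by (intro divide_right_mono) auto
    also have "\<dots> = A3 * (J3 / Z) + M * (J4 / Z)" by (simp add: add_divide_distrib)
    also have "\<dots> \<le> A3 * (C 3 / sqrt \<beta> ^ 3) + M * (C 4 / sqrt \<beta> ^ 4)"
      using L3(2) L4(3) A3 M(1) unfolding J3_def J4_def Z_def
      by (intro add_mono mult_left_mono) auto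
    finally show ?thesis .
  qed
  define K0 where "K0 = \<bar>A3 * C 3\<bar> + \<bar>M * C 4\<bar>"
  have K0: "K0 \<ge> 0" by (simp add: K0_def)
  have D3eq: "(deriv ^^ 3) (logf f) 0 = D 3 0" by (simp add: D_def h_def)
  show ?thesis
  proof (cases "D 3 0 = 0")
    case True
    have "\<forall>\<^sub>F \<beta> in at_top. norm (Rfun f \<beta> / (4 * \<beta>)) \<le> (K0/4) * norm (\<beta> powr (-3))"
    proof (rule eventually_at_top_linorderI[of \<beta>1])
      fix \<beta> :: real assume \<beta>: "\<beta> \<ge> \<beta>1"
      have b1: "\<beta> \<ge> 1" using \<beta> \<beta>1 by simp
      have "\<bar>Rfun f \<beta>\<bar> \<le> M * (C 4 / sqrt \<beta> ^ 4)" using Rb[OF \<beta>] True by (simp add: A3_def)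
      also have "\<dots> = (M * C 4) / sqrt \<beta> ^ 4" by simp
      also have "\<dots> \<le> K0 / sqrt \<beta> ^ 4" unfolding K0_def
        by (intro divide_right_mono) auto
      finally have "\<bar>Rfun f \<beta> / (4*\<beta>)\<bar> \<le> (K0/4) * (1 / sqrt \<beta> ^ (4+2))" by (rule final_arith[OF b1])
      also have "1 / sqrt \<beta> ^ (4+2) = \<beta> powr (-3)" using b1 by (simp add: pw3)
      finally show "norm (Rfun f \<beta> / (4 * \<beta>)) \<le> (K0/4) * norm (\<beta> powr (-3))" by simp
    qed
    then have "(\<lambda>\<beta>. Rfun f \<beta> / (4 * \<beta>)) \<in> O[at_top](\<lambda>\<beta>. \<beta> powr (-3))" by (rule bigoI)
    then show ?thesis using True D3eq by simp
  next
    case False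
    have "\<forall>\<^sub>F \<beta> in at_top. norm (Rfun f \<beta> / (4 * \<beta>)) \<le> (K0/4) * norm (\<beta> powr (-(5/2)))"
    proof (rule eventually_at_top_linorderI[of \<beta>1])
      fix \<beta> :: real assume \<beta>: "\<beta> \<ge> \<beta>1"
      have b1: "\<beta> \<ge> 1" using \<beta> \<beta>1 by simp
      have s1: "sqrt \<beta> \<ge> 1" using b1 by simp
      have p34: "sqrt \<beta> ^ 3 \<le> sqrt \<beta> ^ 4" using s1 by (intro power_increasing) auto
      have p3: "sqrt \<beta> ^ 3 > 0" using s1 by simp
      have "A3 * (C 3 / sqrt \<beta> ^ 3) \<le> \<bar>A3 * C 3\<bar> / sqrt \<beta> ^ 3"
        using p3 by (simp add: divide_right_mono)
      moreover have "M * (C 4 / sqrt \<beta> ^ 4) \<le> \<bar>M * C 4\<bar> / sqrt \<beta> ^ 3"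
      proof -
        have "M * (C 4 / sqrt \<beta> ^ 4) \<le> \<bar>M * C 4\<bar> / sqrt \<beta> ^ 4" using p3 p34 by (simp add: divide_right_mono)
        also have "\<dots> \<le> \<bar>M * C 4\<bar> / sqrt \<beta> ^ 3" using p3 p34 by (intro divide_left_mono) auto
        finally show ?thesis .
      qed
      ultimately have "\<bar>Rfun f \<beta>\<bar> \<le> K0 / sqrt \<beta> ^ 3" using Rb[OF \<beta>] unfolding K0_def by (simp add: add_divide_distrib)
      then have "\<bar>Rfun f \<beta> / (4*\<beta>)\<bar> \<le> (K0/4) * (1 / sqrt \<beta> ^ (3+2))" by (rule final_arith[OF b1])
      also have "1 / sqrt \<beta> ^ (3+2) = \<beta> powr (-(5/2))" using b1 by (simp add: pw52)
      finally show "norm (Rfun f \<beta> / (4 * \<beta>)) \<le> (K0/4) * norm (\<beta> powr (-(5/2)))" by simp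
    qed
    then have "(\<lambda>\<beta>. Rfun f \<beta> / (4 * \<beta>)) \<in> O[at_top](\<lambda>\<beta>. \<beta> powr (-(5/2)))" by (rule bigoI)
    then show ?thesis using False D3eq by simp
  qed
qed

end
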